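(* Let $\mathfrak g$ be a Lie algebra, $(\mathfrak k,\pi)$ a $\mathfrak g$-Lie algebra (write $\xi\cdot x=\pi(\xi)x$), $r_\pm:\mathfrak k\to\mathfrak g$ linear maps, $\lambda\in\mathbb R$, $r=(r_++r_-)/2$, $\beta=(r_+-r_-)/2$. Suppose $\beta$ is antisymmetric of mass $\nu\neq0$, $\mathfrak g$-invariant of mass $\kappa\neq0$ and equivalent of mass $\lambda$. Then: (i) for each sign, the bracket $[x,y]_\pm:=\lambda[x,y]_{\mathfrak k}\pm2\beta(x)\cdot y$ is a Lie bracket on the vector space $\mathfrak k$, and with it $(\mathfrak k_\pm,\pi)$ is a $\mathfrak g$-Lie algebra; (ii) for each sign, $r$ is an extended $\mathcal O$-operator of weight $\lambda$ with extension $\beta$ of mass $(\nu,-1,\pm\lambda)$ (for $\nu\neq 0$) if and only if $r_\pm:\mathfrak k_\mp\to\mathfrak g$ is an $\mathcal O$-operator of weight $1$, where $\mathfrak k_\mp$ carries the bracket $[\,,\,]_\mp$.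
   Context: All spaces are finite-dimensional real. A $\mathfrak g$-Lie algebra $(\mathfrak k,\pi)$ is a Lie algebra $(\mathfrak k,[\,,\,]_{\mathfrak k})$ with a Lie algebra homomorphism $\pi:\mathfrak g\to\mathrm{Der}(\mathfrak k)$. For constants $\nu,\kappa,\mu$, a linear map $\beta:\mathfrak k\to\mathfrak g$ is: antisymmetric of mass $\nu$ if $\nu(\beta(x)\cdot y+\beta(y)\cdot x)=0$; $\mathfrak g$-invariant of mass $\kappa$ if $\kappa\beta(\xi\cdot x)=\kappa[\xi,\beta(x)]_{\mathfrak g}$; equivalent of mass $\mu$ if $\mu\beta([x,y]_{\mathfrak k})\cdot z=\mu[\beta(x)\cdot y,z]_{\mathfrak k}$ (for all $x,y,z\in\mathfrak k,\xi\in\mathfrak g$). Given such $\beta$, $r:\mathfrak k\to\mathfrak g$ is an extended $\mathcal O$-operator of weight $\lambda$ with extension $\beta$ of mass $(\nu,\kappa,\mu)$ if $[r(x),r(y)]_{\mathfrak g}-r(r(x)\cdot y-r(y)\cdot x+\lambda[x,y]_{\mathfrak k})=\kappa[\beta(x),\beta(y)]_{\mathfrak g}+\mu\beta([x,y]_{\mathfrak k})$ for all $x,y$. If $(\mathfrak k,\pi)$ is a $\mathfrak g$-Lie algebra with bracket $[\,,\,]$, a linear map $T:\mathfrak k\to\mathfrak g$ is an $\mathcal O$-operator of weight $\lambda$ if $[T(x),T(y)]_{\mathfrak g}=T(T(x)\cdot y-T(y)\cdot x+\lambda[x,y])$ for all $x,y$. *)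

theory Defs
  imports "HOL-Analysis.Analysis"
begin

text \<open>All spaces are finite-dimensional real vector spaces; we model them by
types of class euclidean_space. A Lie bracket is a bilinear, alternating map
satisfying the Jacobi identity.\<close>

definition lie_algebra :: "('a::real_vector \<Rightarrow> 'a \<Rightarrow> 'a) \<Rightarrow> bool" where
  "lie_algebra B \<longleftrightarrow>
     (\<forall>x. linear (B x)) \<and> (\<forall>y. linear (\<lambda>x. B x y)) \<and>
     (\<forall>x. B x x = 0) \<and>
     (\<forall>x y z. B x (B y z) + B y (B z x) + B z (B x y) = 0)"

definition derivation :: "('a::real_vector \<Rightarrow> 'a \<Rightarrow> 'a) \<Rightarrow> ('a \<Rightarrow> 'a) \<Rightarrow> bool" where
  "derivation B D \<longleftrightarrow> linear D \<and> (\<forall>x y. D (B x y) = B (D x) y + B x (D y))"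

definition g_lie_algebra ::
  "('g::real_vector \<Rightarrow> 'g \<Rightarrow> 'g) \<Rightarrow> ('k::real_vector \<Rightarrow> 'k \<Rightarrow> 'k) \<Rightarrow> ('g \<Rightarrow> 'k \<Rightarrow> 'k) \<Rightarrow> bool" where
  "g_lie_algebra Bg Bk \<pi> \<longleftrightarrow>
     lie_algebra Bk \<and> (\<forall>x. linear (\<lambda>\<xi>. \<pi> \<xi> x)) \<and> (\<forall>\<xi>. derivation Bk (\<pi> \<xi>)) \<and>
     (\<forall>\<xi> \<eta> x. \<pi> (Bg \<xi> \<eta>) x = \<pi> \<xi> (\<pi> \<eta> x) - \<pi> \<eta> (\<pi> \<xi> x))"

definition antisymmetric_mass ::
  "('g \<Rightarrow> 'k \<Rightarrow> 'k::real_vector) \<Rightarrow> ('k \<Rightarrow> 'g) \<Rightarrow> real \<Rightarrow> bool" where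
  "antisymmetric_mass \<pi> \<beta> \<nu> \<longleftrightarrow> (\<forall>x y. \<nu> *\<^sub>R (\<pi> (\<beta> x) y + \<pi> (\<beta> y) x) = 0)"

definition invariant_mass ::
  "('g::real_vector \<Rightarrow> 'g \<Rightarrow> 'g) \<Rightarrow> ('g \<Rightarrow> 'k \<Rightarrow> 'k) \<Rightarrow> ('k \<Rightarrow> 'g) \<Rightarrow> real \<Rightarrow> bool" where
  "invariant_mass Bg \<pi> \<beta> \<kappa> \<longleftrightarrow> (\<forall>\<xi> x. \<kappa> *\<^sub>R \<beta> (\<pi> \<xi> x) = \<kappa> *\<^sub>R Bg \<xi> (\<beta> x))"

definition equivalent_mass ::
  "('k::real_vector \<Rightarrow> 'k \<Rightarrow> 'k) \<Rightarrow> ('g \<Rightarrow> 'k \<Rightarrow> 'k) \<Rightarrow> ('k \<Rightarrow> 'g) \<Rightarrow> real \<Rightarrow> bool" where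
  "equivalent_mass Bk \<pi> \<beta> \<mu> \<longleftrightarrow>
     (\<forall>x y z. \<mu> *\<^sub>R \<pi> (\<beta> (Bk x y)) z = \<mu> *\<^sub>R Bk (\<pi> (\<beta> x) y) z)"

definition ext_O_operator ::
  "('g::real_vector \<Rightarrow> 'g \<Rightarrow> 'g) \<Rightarrow> ('k::real_vector \<Rightarrow> 'k \<Rightarrow> 'k) \<Rightarrow> ('g \<Rightarrow> 'k \<Rightarrow> 'k)
    \<Rightarrow> real \<Rightarrow> ('k \<Rightarrow> 'g) \<Rightarrow> real \<Rightarrow> real \<Rightarrow> real \<Rightarrow> ('k \<Rightarrow> 'g) \<Rightarrow> bool" where
  "ext_O_operator Bg Bk \<pi> lam \<beta> \<nu> \<kappa> \<mu> r \<longleftrightarrow>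
     linear r \<and> linear \<beta> \<and>
     antisymmetric_mass \<pi> \<beta> \<nu> \<and> invariant_mass Bg \<pi> \<beta> \<kappa> \<and> equivalent_mass Bk \<pi> \<beta> \<mu> \<and>
     (\<forall>x y. Bg (r x) (r y) - r (\<pi> (r x) y - \<pi> (r y) x + lam *\<^sub>R Bk x y)
            = \<kappa> *\<^sub>R Bg (\<beta> x) (\<beta> y) + \<mu> *\<^sub>R \<beta> (Bk x y))"

definition O_operator ::
  "('g::real_vector \<Rightarrow> 'g \<Rightarrow> 'g) \<Rightarrow> ('k::real_vector \<Rightarrow> 'k \<Rightarrow> 'k) \<Rightarrow> ('g \<Rightarrow> 'k \<Rightarrow> 'k)
    \<Rightarrow> real \<Rightarrow> ('k \<Rightarrow> 'g) \<Rightarrow> bool" where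
  "O_operator Bg Bk \<pi> lam T \<longleftrightarrow>
     linear T \<and>
     (\<forall>x y. Bg (T x) (T y) = T (\<pi> (T x) y - \<pi> (T y) x + lam *\<^sub>R Bk x y))"

text \<open>The brackets [x,y]_+ (s = 1) and [x,y]_- (s = -1):
  lam [x,y]_k + 2 s beta(x).y\<close>
definition pm_bracket ::
  "('k::real_vector \<Rightarrow> 'k \<Rightarrow> 'k) \<Rightarrow> ('g \<Rightarrow> 'k \<Rightarrow> 'k) \<Rightarrow> ('k \<Rightarrow> 'g) \<Rightarrow> real \<Rightarrow> real
     \<Rightarrow> 'k \<Rightarrow> 'k \<Rightarrow> 'k" where
  "pm_bracket Bk \<pi> \<beta> lam s x y = lam *\<^sub>R Bk x y + (2 * s) *\<^sub>R \<pi> (\<beta> x) y"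

end

theory Submission
  imports Defs
begin

locale tsetup =
  fixes Bg :: "'g::real_vector \<Rightarrow> 'g \<Rightarrow> 'g"
    and Bk :: "'k::real_vector \<Rightarrow> 'k \<Rightarrow> 'k"
    and \<pi> :: "'g \<Rightarrow> 'k \<Rightarrow> 'k"
    and \<beta> :: "'k \<Rightarrow> 'g"
    and lam :: real
  assumes lieg: "lie_algebra Bg"
    and gl: "g_lie_algebra Bg Bk \<pi>"
    and linb: "linear \<beta>"
    and A: "\<And>x y. \<pi> (\<beta> x) y = - \<pi> (\<beta> y) x"
    and I: "\<And>\<xi> x. \<beta> (\<pi> \<xi> x) = Bg \<xi> (\<beta> x)"
    and E: "\<And>x y z. lam *\<^sub>R \<pi> (\<beta> (Bk x y)) z = lam *\<^sub>R Bk (\<pi> (\<beta> x) y) z"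
begin

lemma liek: "lie_algebra Bk" using gl by (simp add: g_lie_algebra_def)
lemma hom: "\<pi> (Bg \<xi> \<eta>) x = \<pi> \<xi> (\<pi> \<eta> x) - \<pi> \<eta> (\<pi> \<xi> x)" using gl by (simp add: g_lie_algebra_def)
lemma der: "\<pi> \<xi> (Bk x y) = Bk (\<pi> \<xi> x) y + Bk x (\<pi> \<xi> y)" using gl by (simp add: g_lie_algebra_def derivation_def)
lemma linpi1: "linear (\<lambda>\<xi>. \<pi> \<xi> x)" using gl by (simp add: g_lie_algebra_def)
lemma linpi2: "linear (\<pi> \<xi>)" using gl by (simp add: g_lie_algebra_def derivation_def)
lemma linBk1: "linear (Bk x)" using liek by (simp add: lie_algebra_def)
lemma linBk2: "linear (\<lambda>x. Bk x y)" using liek by (simp add: lie_algebra_def)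
lemma linBg1: "linear (Bg x)" using lieg by (simp add: lie_algebra_def)
lemma linBg2: "linear (\<lambda>x. Bg x y)" using lieg by (simp add: lie_algebra_def)

lemmas lin_simps =
  linear_add[OF linpi1, simplified] linear_diff[OF linpi1, simplified] linear_scale[OF linpi1, simplified]
  linear_neg[OF linpi1, simplified]
  linear_add[OF linpi2] linear_diff[OF linpi2] linear_scale[OF linpi2] linear_neg[OF linpi2]
  linear_add[OF linBk1] linear_diff[OF linBk1] linear_scale[OF linBk1] linear_neg[OF linBk1]
  linear_add[OF linBk2, simplified] linear_diff[OF linBk2, simplified] linear_scale[OF linBk2, simplified]
  linear_neg[OF linBk2, simplified]
  linear_add[OF linBg1] linear_diff[OF linBg1] linear_scale[OF linBg1] linear_neg[OF linBg1]
  linear_add[OF linBg2, simplified] linear_diff[OF linBg2, simplified] linear_scale[OF linBg2, simplified]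
  linear_neg[OF linBg2, simplified]
  linear_add[OF linb] linear_diff[OF linb] linear_scale[OF linb] linear_neg[OF linb]

lemma skew_gen:
  assumes "lie_algebra B" shows "B u v = - B v u"
proof -
  have l1: "\<And>x. linear (B x)" and l2: "\<And>y. linear (\<lambda>x. B x y)" and al: "\<And>x. B x x = 0"
    using assms by (auto simp: lie_algebra_def)
  have "B (u+v) (u+v) = B u u + B u v + B v u + B v v"
    using linear_add[OF l1] linear_add[OF l2, simplified] by simp
  then show ?thesis using al by (simp add: eq_neg_iff_add_eq_0)
qed

lemma skewg: "Bg u v = - Bg v u" by (rule skew_gen[OF lieg])
lemma skewk: "Bk u v = - Bk v u" by (rule skew_gen[OF liek])
lemma jack: "Bk x (Bk y z) + Bk y (Bk z x) + Bk z (Bk x y) = 0"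
  using liek by (simp add: lie_algebra_def)

abbreviation "P s \<equiv> pm_bracket Bk \<pi> \<beta> lam s"

lemma F4: "\<pi> (\<beta> x) (\<pi> (\<beta> y) z) + \<pi> (\<beta> y) (\<pi> (\<beta> z) x) + \<pi> (\<beta> z) (\<pi> (\<beta> x) y) = 0"
proof -
  have 1: "\<pi> (\<beta> y) (\<pi> (\<beta> z) x) = - \<pi> (\<beta> y) (\<pi> (\<beta> x) z)"
    by (subst A) (simp add: lin_simps)
  have 2: "\<pi> (\<beta> z) (\<pi> (\<beta> x) y) = - (\<pi> (\<beta> x) (\<pi> (\<beta> y) z) - \<pi> (\<beta> y) (\<pi> (\<beta> x) z))"
    by (subst A) (simp add: I hom)
  show ?thesis by (simp add: 1 2)
qed

definition "a x y z = Bk x (\<pi> (\<beta> y) z)"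

lemma T1: "lam *\<^sub>R (a x y z + a y z x + a z x y) = 0"
proof -
  have d: "\<pi> (\<beta> x) (Bk y z) = - a z x y + a y x z"
    unfolding a_def by (simp add: der skewk[of "\<pi> (\<beta> x) y" z])
  have e: "lam *\<^sub>R Bk (\<pi> (\<beta> y) z) x = - lam *\<^sub>R \<pi> (\<beta> x) (Bk y z)"
    using E[of y z x] A[of "Bk y z" x] by simp
  have f: "Bk (\<pi> (\<beta> y) z) x = - a x y z" unfolding a_def by (rule skewk)
  have g: "a y x z = - a y z x" unfolding a_def by (simp add: A[of x z] lin_simps)
  from e have H: "lam *\<^sub>R a x y z = lam *\<^sub>R (- a z x y - a y z x)"
    by (simp add: f d g)
  have "lam *\<^sub>R (a x y z + a y z x + a z x y) = lam *\<^sub>R a x y z + lam *\<^sub>R a y z x + lam *\<^sub>R a z x y"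
    by (simp only: scaleR_add_right)
  also have "\<dots> = 0" unfolding H by (simp add: scaleR_diff_right)
  finally show ?thesis .
qed

lemma F2: "lam *\<^sub>R ((Bk x (\<pi> (\<beta> y) z) + \<pi> (\<beta> x) (Bk y z))
   + (Bk y (\<pi> (\<beta> z) x) + \<pi> (\<beta> y) (Bk z x))
   + (Bk z (\<pi> (\<beta> x) y) + \<pi> (\<beta> z) (Bk x y))) = 0"
proof -
  have d: "\<pi> (\<beta> x) (Bk y z) = - a z x y - a y z x" for x y z
  proof -
    have 1: "Bk (\<pi> (\<beta> x) y) z = - a z x y" unfolding a_def by (rule skewk)
    have 2: "Bk y (\<pi> (\<beta> x) z) = - a y z x" unfolding a_def by (simp add: A[of x z] lin_simps)
    show ?thesis by (simp only: der 1 2) simp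
  qed
  have "(Bk x (\<pi> (\<beta> y) z) + \<pi> (\<beta> x) (Bk y z))
   + (Bk y (\<pi> (\<beta> z) x) + \<pi> (\<beta> y) (Bk z x))
   + (Bk z (\<pi> (\<beta> x) y) + \<pi> (\<beta> z) (Bk x y)) = - (a x y z + a y z x + a z x y)"
    unfolding d by (simp add: a_def algebra_simps)
  then show ?thesis by (simp only: scaleR_minus_right T1 minus_zero)
qed

lemma expand: "P s x (P s y z) = (lam * lam) *\<^sub>R Bk x (Bk y z)
   + (2 * s * lam) *\<^sub>R (Bk x (\<pi> (\<beta> y) z) + \<pi> (\<beta> x) (Bk y z))
   + (4 * s * s) *\<^sub>R \<pi> (\<beta> x) (\<pi> (\<beta> y) z)"
  by (simp add: pm_bracket_def lin_simps algebra_simps)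

lemma jacP: "P s x (P s y z) + P s y (P s z x) + P s z (P s x y) = 0"
proof -
  have "P s x (P s y z) + P s y (P s z x) + P s z (P s x y) =
     (lam * lam) *\<^sub>R (Bk x (Bk y z) + Bk y (Bk z x) + Bk z (Bk x y))
   + (2 * s) *\<^sub>R (lam *\<^sub>R ((Bk x (\<pi> (\<beta> y) z) + \<pi> (\<beta> x) (Bk y z))
   + (Bk y (\<pi> (\<beta> z) x) + \<pi> (\<beta> y) (Bk z x))
   + (Bk z (\<pi> (\<beta> x) y) + \<pi> (\<beta> z) (Bk x y))))
   + (4 * s * s) *\<^sub>R (\<pi> (\<beta> x) (\<pi> (\<beta> y) z) + \<pi> (\<beta> y) (\<pi> (\<beta> z) x) + \<pi> (\<beta> z) (\<pi> (\<beta> x) y))"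
    unfolding expand by (simp add: scaleR_add_right scaleR_scaleR algebra_simps)
  then show ?thesis using jack F2 F4 by simp
qed

lemma lieP: "lie_algebra (P s)"
  unfolding lie_algebra_def
proof (intro conjI allI)
  fix x show "linear (P s x)" unfolding linear_iff pm_bracket_def
    by (simp add: lin_simps algebra_simps)
next
  fix y show "linear (\<lambda>x. P s x y)" unfolding linear_iff pm_bracket_def
    by (simp add: lin_simps algebra_simps)
next
  fix x have "\<pi> (\<beta> x) x + \<pi> (\<beta> x) x = 0" using A[of x x] by (simp add: eq_neg_iff_add_eq_0)
  hence "\<pi> (\<beta> x) x = 0" by (metis scaleR_2 scaleR_eq_0_iff zero_neq_numeral)
  then show "P s x x = 0" using liek by (simp add: pm_bracket_def lie_algebra_def)
next
  fix x y z show "P s x (P s y z) + P s y (P s z x) + P s z (P s x y) = 0" by (rule jacP)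
qed

lemma glP: "g_lie_algebra Bg (P s) \<pi>"
  unfolding g_lie_algebra_def
proof (intro conjI allI)
  show "lie_algebra (P s)" by (rule lieP)
  fix x show "linear (\<lambda>\<xi>. \<pi> \<xi> x)" by (rule linpi1)
next
  fix \<xi> show "derivation (P s) (\<pi> \<xi>)" unfolding derivation_def
    by (simp add: linpi2 pm_bracket_def lin_simps der I hom algebra_simps)
next
  fix \<xi> \<eta> x show "\<pi> (Bg \<xi> \<eta>) x = \<pi> \<xi> (\<pi> \<eta> x) - \<pi> \<eta> (\<pi> \<xi> x)" by (rule hom)
qed

lemma Oeq:
  assumes linr: "linear r" and T: "\<And>x. T x = r x + t *\<^sub>R \<beta> x" and t: "t * t = 1"
  shows "(Bg (T x) (T y) = T (\<pi> (T x) y - \<pi> (T y) x + 1 *\<^sub>R P (-t) x y)) \<longleftrightarrow>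
    (Bg (r x) (r y) - r (\<pi> (r x) y - \<pi> (r y) x + lam *\<^sub>R Bk x y)
       = (-1) *\<^sub>R Bg (\<beta> x) (\<beta> y) + (t * lam) *\<^sub>R \<beta> (Bk x y))"
proof -
  define M where "M = \<pi> (r x) y - \<pi> (r y) x + lam *\<^sub>R Bk x y"
  have arg: "\<pi> (T x) y - \<pi> (T y) x + 1 *\<^sub>R P (-t) x y = M"
    unfolding M_def T pm_bracket_def using A[of y x] by (simp add: lin_simps algebra_simps) (metis mult_2_right scaleR_left_distrib mult.commute)
  have rhs: "T M = r M + t *\<^sub>R (Bg (r x) (\<beta> y) - Bg (r y) (\<beta> x)) + (t * lam) *\<^sub>R \<beta> (Bk x y)"
    unfolding T M_def by (simp add: lin_simps I algebra_simps)
  have lhs: "Bg (T x) (T y) = Bg (r x) (r y) + t *\<^sub>R Bg (r x) (\<beta> y) - t *\<^sub>R Bg (r y) (\<beta> x)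
      + Bg (\<beta> x) (\<beta> y)"
    unfolding T using t skewg[of "\<beta> x" "r y"] by (simp add: lin_simps algebra_simps)
  show ?thesis unfolding arg M_def[symmetric] rhs lhs
    by (simp add: algebra_simps)
qed

end

theorem theorem2p15:
  fixes Bg :: "'g::euclidean_space \<Rightarrow> 'g \<Rightarrow> 'g"
    and Bk :: "'k::euclidean_space \<Rightarrow> 'k \<Rightarrow> 'k"
    and \<pi> :: "'g \<Rightarrow> 'k \<Rightarrow> 'k"
    and rp rm :: "'k \<Rightarrow> 'g"
    and lam \<nu> \<kappa> :: real
  defines "r \<equiv> (\<lambda>x. (1/2) *\<^sub>R (rp x + rm x))"
    and "\<beta> \<equiv> (\<lambda>x. (1/2) *\<^sub>R (rp x - rm x))"
  assumes "lie_algebra Bg"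
    and "g_lie_algebra Bg Bk \<pi>"
    and "linear rp" and "linear rm"
    and "\<nu> \<noteq> 0" and "\<kappa> \<noteq> 0"
    and "antisymmetric_mass \<pi> \<beta> \<nu>"
    and "invariant_mass Bg \<pi> \<beta> \<kappa>"
    and "equivalent_mass Bk \<pi> \<beta> lam"
  shows "lie_algebra (pm_bracket Bk \<pi> \<beta> lam 1)
       \<and> g_lie_algebra Bg (pm_bracket Bk \<pi> \<beta> lam 1) \<pi>
       \<and> lie_algebra (pm_bracket Bk \<pi> \<beta> lam (-1))
       \<and> g_lie_algebra Bg (pm_bracket Bk \<pi> \<beta> lam (-1)) \<pi>
       \<and> (ext_O_operator Bg Bk \<pi> lam \<beta> \<nu> (-1) lam r
            \<longleftrightarrow> O_operator Bg (pm_bracket Bk \<pi> \<beta> lam (-1)) \<pi> 1 rp)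
       \<and> (ext_O_operator Bg Bk \<pi> lam \<beta> \<nu> (-1) (-lam) r
            \<longleftrightarrow> O_operator Bg (pm_bracket Bk \<pi> \<beta> lam 1) \<pi> 1 rm)"
proof -
  have linb: "linear \<beta>" unfolding \<beta>_def linear_iff
    using assms(5,6) by (simp add: linear_add linear_scale algebra_simps)
  have linr: "linear r" unfolding r_def linear_iff
    using assms(5,6) by (simp add: linear_add linear_scale algebra_simps)
  have A: "\<And>x y. \<pi> (\<beta> x) y = - \<pi> (\<beta> y) x"
    using assms(9,7) by (simp add: antisymmetric_mass_def eq_neg_iff_add_eq_0)
  have I: "\<And>\<xi> x. \<beta> (\<pi> \<xi> x) = Bg \<xi> (\<beta> x)"
    using assms(10,8) by (simp add: invariant_mass_def)
  have E: "\<And>x y z. lam *\<^sub>R \<pi> (\<beta> (Bk x y)) z = lam *\<^sub>R Bk (\<pi> (\<beta> x) y) z"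
    using assms(11) unfolding equivalent_mass_def by blast
  interpret tsetup Bg Bk \<pi> \<beta> lam
    apply (rule tsetup.intro)
    apply (rule assms(3))
    apply (rule assms(4))
    apply (rule linb)
    apply (rule A)
    apply (rule I)
    apply (rule E)
    done
  have inv1: "invariant_mass Bg \<pi> \<beta> (-1)" by (simp add: invariant_mass_def I)
  have eqm: "equivalent_mass Bk \<pi> \<beta> (-lam)" using E
    by (simp add: equivalent_mass_def)
  have half: "(1/2::real) *\<^sub>R v + (1/2) *\<^sub>R v = v" for v :: 'g
    by (simp flip: scaleR_add_left)
  have rpT: "\<And>x. rp x = r x + 1 *\<^sub>R \<beta> x" unfolding r_def \<beta>_def by (simp add: algebra_simps half)
  have rmT: "\<And>x. rm x = r x + (-1) *\<^sub>R \<beta> x" unfolding r_def \<beta>_def by (simp add: algebra_simps half)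
  have one_t: "(1::real) * 1 = 1" and mone_t: "(-1::real) * (-1) = 1" by simp_all
  have e1: "ext_O_operator Bg Bk \<pi> lam \<beta> \<nu> (-1) lam r
            \<longleftrightarrow> O_operator Bg (P (-1)) \<pi> 1 rp"
    unfolding ext_O_operator_def O_operator_def
    using Oeq[OF linr rpT one_t] linr linb assms(5,9,11) inv1 by simp
  have e2: "ext_O_operator Bg Bk \<pi> lam \<beta> \<nu> (-1) (-lam) r
            \<longleftrightarrow> O_operator Bg (P 1) \<pi> 1 rm"
    unfolding ext_O_operator_def O_operator_def
    using Oeq[OF linr rmT mone_t] linr linb assms(6,9) inv1 eqm by simp
  show ?thesis using lieP glP e1 e2 by simp
qed

end
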